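(* Let $\sigma>0$, $\eta>0$, $\hat\alpha>0$, $h>0$, $r\ge0$, $a\in\mathbb{R}$, and for $\beta\ge0$ let $v_\beta$ denote the unique $C^1[0,\infty)$ solution of $\frac{\sigma^2}2v'(y)=\beta+\frac{\hat\alpha}4v(y)^2+\eta y(v(y)-\frac h\eta)-av(y)$, $y\ge0$, $v(0)=-r$. Let $\underline\beta_2=-ar-\frac{\hat\alpha r^2}4$, and let $i=1$ if $a>-\frac{\hat\alpha}4r$ and $i=2$ if $a\le-\frac{\hat\alpha}4r$. With $\beta_i^*=\inf\mathcal I_i$, the function $v_{\beta_i^*}$ is nondecreasing on $[0,\infty)$ and $\lim_{x\to\infty}v_{\beta_i^*}(x)=h/\eta$.
   Context: $\mathcal I_1=\{\beta\ge0: v_\beta$ is nondecreasing on $(0,\infty)\}$ and $\mathcal I_2=\{\beta>\underline\beta_2: v_\beta$ is nondecreasing on $(0,\infty)\}$. *)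

theory Defs
  imports "HOL-Analysis.Analysis"
begin

definition is_sol ::
  "real \<Rightarrow> real \<Rightarrow> real \<Rightarrow> real \<Rightarrow> real \<Rightarrow> real \<Rightarrow> real \<Rightarrow> (real \<Rightarrow> real) \<Rightarrow> bool" where
  "is_sol \<sigma> \<eta> \<alpha> h r a \<beta> w \<longleftrightarrow>
     (\<exists>w'. continuous_on {0..} w' \<and>
        (\<forall>y\<ge>0. (w has_real_derivative w' y) (at y within {0..}) \<and>
           \<sigma>\<^sup>2 / 2 * w' y = \<beta> + \<alpha> / 4 * (w y)\<^sup>2 + \<eta> * y * (w y - h / \<eta>) - a * w y)) \<and>
     w 0 = - r"

text \<open>Since the ODE has a locally Lipschitz right-hand side, a C^1[0,oo) solution is unique
  when it exists; "v_beta is nondecreasing on (0,oo)" is rendered as "the (unique) solution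
  exists and is nondecreasing on (0,oo)".\<close>
definition I1 :: "real \<Rightarrow> real \<Rightarrow> real \<Rightarrow> real \<Rightarrow> real \<Rightarrow> real \<Rightarrow> real set" where
  "I1 \<sigma> \<eta> \<alpha> h r a =
     {\<beta>. \<beta> \<ge> 0 \<and> (\<exists>w. is_sol \<sigma> \<eta> \<alpha> h r a \<beta> w \<and> mono_on {0<..} w)}"

definition beta2_low :: "real \<Rightarrow> real \<Rightarrow> real \<Rightarrow> real" where
  "beta2_low \<alpha> r a = - a * r - \<alpha> * r\<^sup>2 / 4"

definition I2 :: "real \<Rightarrow> real \<Rightarrow> real \<Rightarrow> real \<Rightarrow> real \<Rightarrow> real \<Rightarrow> real set" where
  "I2 \<sigma> \<eta> \<alpha> h r a =
     {\<beta>. \<beta> > beta2_low \<alpha> r a \<and> (\<exists>w. is_sol \<sigma> \<eta> \<alpha> h r a \<beta> w \<and> mono_on {0<..} w)}"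

end

theory Submission
  imports Defs
begin

definition KB :: "real \<Rightarrow> real \<Rightarrow> real \<Rightarrow> real" where
  "KB A D R = (max 1 (2*D*R^2))^(nat \<lceil>4*D*R^2\<rceil> + 1) * (A*R) * (4/3)^(nat \<lceil>4*D*R^2\<rceil> + 1)"

lemma coef_bound:
  fixes c :: "nat \<Rightarrow> real"
  assumes R: "R \<ge> 1" and D: "D \<ge> 0" and c0: "\<bar>c 0\<bar> \<le> A" and c1: "\<bar>c 1\<bar> \<le> A"
  and rec: "\<And>n. \<bar>c (n+2)\<bar> \<le> D/(real n+1) * (\<bar>c (n+1)\<bar> + \<bar>c n\<bar>)"
  shows "\<bar>c n\<bar> * R^n \<le> KB A D R * (3/4)^n"
proof -
  define g where "g n = \<bar>c n\<bar> * R^n" for n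
  define E where "E = max 1 (2*D*R^2)"
  define N where "N = nat \<lceil>4*D*R^2\<rceil>"
  define K where "K = KB A D R"
  have A0: "A \<ge> 0" using c0 by linarith
  have g0: "g n \<ge> 0" for n using R by (simp add: g_def)
  have grec: "g (n+2) \<le> D*R^2/(real n+1) * (g (n+1) + g n)" for n
  proof -
    have "g (n+2) = \<bar>c (n+2)\<bar> * R^(n+2)" by (simp add: g_def)
    also have "\<dots> \<le> D/(real n+1) * (\<bar>c (n+1)\<bar> + \<bar>c n\<bar>) * R^(n+2)"
      by (intro mult_right_mono[OF rec]) (use R in auto)
    also have "\<dots> = D/(real n+1) * (g (n+1) * R + g n * R^2)"
      by (simp add: g_def power_add algebra_simps power2_eq_square)
    also have "\<dots> \<le> D/(real n+1) * (g (n+1) * R^2 + g n * R^2)"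
    proof -
      have "g (n+1) * R \<le> g (n+1) * R^2"
        using g0[of "n+1"] R by (intro mult_left_mono) (auto simp: power2_eq_square)
      then show ?thesis using D by (intro mult_left_mono) auto
    qed
    also have "\<dots> = D*R^2/(real n+1) * (g (n+1) + g n)" by (simp add: field_simps)
    finally show ?thesis .
  qed
  have E1: "E \<ge> 1" and E2: "2*D*R^2 \<le> E" by (auto simp: E_def)
  have cl1: "g n \<le> E^n * (A*R) \<and> g (n+1) \<le> E^(n+1) * (A*R)" for n
  proof (induction n)
    case 0
    have "g 0 \<le> A*R" using c0 R A0 by (simp add: g_def) (metis mult_left_mono mult.right_neutral order_trans)
    moreover have "g 1 \<le> E * (A*R)"
    proof -
      have "g 1 \<le> A * R" using c1 R by (simp add: g_def mult_right_mono)
      also have "\<dots> \<le> E * (A*R)" using mult_right_mono[OF E1, of "A*R"] A0 R by simp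
      finally show ?thesis .
    qed
    ultimately show ?case by simp
  next
    case (Suc n)
    have "g (n+2) \<le> D*R^2/(real n+1) * (g (n+1) + g n)" by (rule grec)
    also have "\<dots> \<le> D*R^2 * (g (n+1) + g n)"
    proof -
      have "D*R^2/(real n+1) \<le> D*R^2" using D by (simp add: divide_le_eq field_simps)
      then show ?thesis using g0[of n] g0[of "n+1"] by (intro mult_right_mono) auto
    qed
    also have "\<dots> \<le> D*R^2 * (E^(n+1)*(A*R) + E^n*(A*R))"
      using Suc D by (intro mult_left_mono add_mono) auto
    also have "\<dots> \<le> D*R^2 * (2 * (E^(n+1)*(A*R)))"
    proof -
      have "E^n \<le> E^(n+1)" using E1 by (simp add: power_increasing)
      then have "E^n*(A*R) \<le> E^(n+1)*(A*R)" using A0 R by (intro mult_right_mono) auto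
      then show ?thesis using D by (intro mult_left_mono) (auto simp: algebra_simps)
    qed
    also have "\<dots> = (2*D*R^2) * (E^(n+1)*(A*R))" by simp
    also have "\<dots> \<le> E * (E^(n+1)*(A*R))"
      using E2 A0 R E1 by (intro mult_right_mono) auto
    also have "\<dots> = E^(n+2) * (A*R)" by simp
    finally show ?case using Suc by simp
  qed
  have KE: "K * (3/4)^(N+1) = E^(N+1) * (A*R)"
    by (simp add: K_def KB_def E_def N_def power_mult_distrib[symmetric])
  have K0: "K \<ge> 0" unfolding K_def KB_def using A0 R by (intro mult_nonneg_nonneg) auto
  have "g n \<le> K * (3/4)^n" for n
  proof (induction n rule: less_induct)
    case (less n)
    show ?case
    proof (cases "n \<le> N+1")
      case True
      have "g n \<le> E^n * (A*R)" using cl1 by blast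
      also have "\<dots> \<le> E^(N+1) * (A*R)" using True E1 A0 R
        by (intro mult_right_mono power_increasing) auto
      also have "\<dots> = K * (3/4)^(N+1)" by (rule KE[symmetric])
      also have "\<dots> \<le> K * (3/4)^n" using True K0
        by (intro mult_left_mono power_decreasing) auto
      finally show ?thesis .
    next
      case False
      then obtain m where m: "n = m+2" "m \<ge> N" using that[of "n-2"] by auto
      have "g (m+2) \<le> D*R^2/(real m+1) * (g (m+1) + g m)" by (rule grec)
      also have "\<dots> \<le> 1/4 * (g (m+1) + g m)"
      proof -
        have "4*D*R^2 \<le> N" unfolding N_def by linarith
        then have "4*D*R^2 \<le> m+1" using m by linarith
        then have "D*R^2/(real m+1) \<le> 1/4" by (simp add: divide_le_eq)
        then show ?thesis using g0[of m] g0[of "m+1"] by (intro mult_right_mono) auto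
      qed
      also have "\<dots> \<le> 1/4 * (K*(3/4)^(m+1) + K*(3/4)^m)"
      proof -
        have "g (m+1) \<le> K*(3/4)^(m+1)" by (rule less.IH) (use m in simp)
        moreover have "g m \<le> K*(3/4)^m" by (rule less.IH) (use m in simp)
        ultimately show ?thesis by (intro mult_left_mono add_mono) auto
      qed
      also have "\<dots> = K*(3/4)^m * (7/16)" by (simp add: algebra_simps)
      also have "\<dots> \<le> K*(3/4)^m * (9/16)" using K0 by (intro mult_left_mono) auto
      also have "\<dots> = K*(3/4)^(m+2)" by (simp add: power_add)
      finally show ?thesis using m by simp
    qed
  qed
  then show ?thesis by (simp add: g_def K_def)
qed


lemma rec_ineq:
  fixes p0 p1 q x y :: real and n :: nat
  shows "\<bar>(p0*(real n+1)*x + (p1*real n+q)*y)/((real n+2)*(real n+1))\<bar>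
         \<le> (\<bar>p0\<bar>+\<bar>p1\<bar>+\<bar>q\<bar>)/(real n+1)*(\<bar>x\<bar>+\<bar>y\<bar>)"
proof -
  define D where "D = \<bar>p0\<bar>+\<bar>p1\<bar>+\<bar>q\<bar>"
  have pos: "(real n+2)*(real n+1) > 0" by simp
  have "\<bar>p0*(real n+1)*x + (p1*real n+q)*y\<bar> \<le> \<bar>p0\<bar>*(real n+1)*\<bar>x\<bar> + (\<bar>p1\<bar>*real n+\<bar>q\<bar>)*\<bar>y\<bar>"
  proof -
    have "\<bar>p1*real n+q\<bar> \<le> \<bar>p1\<bar>*real n+\<bar>q\<bar>"
      by (metis abs_mult abs_of_nat abs_triangle_ineq of_nat_0_le_iff abs_of_nonneg)
    then have "\<bar>(p1*real n+q)*y\<bar> \<le> (\<bar>p1\<bar>*real n+\<bar>q\<bar>)*\<bar>y\<bar>"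
      by (simp add: abs_mult mult_right_mono)
    moreover have "\<bar>p0*(real n+1)*x\<bar> = \<bar>p0\<bar>*(real n+1)*\<bar>x\<bar>" by (simp add: abs_mult)
    ultimately show ?thesis by (smt (verit))
  qed
  also have "\<dots> \<le> D*(real n+2)*\<bar>x\<bar> + D*(real n+2)*\<bar>y\<bar>"
  proof (intro add_mono mult_right_mono)
    show "\<bar>p0\<bar>*(real n+1) \<le> D*(real n+2)" unfolding D_def
      by (intro mult_mono) auto
    have "\<bar>p1\<bar>*real n \<le> \<bar>p1\<bar>*(real n+2)" by (intro mult_left_mono) auto
    moreover have "\<bar>q\<bar> \<le> \<bar>q\<bar>*(real n+2)" by (simp add: mult_le_cancel_left1)
    ultimately show "\<bar>p1\<bar>*real n+\<bar>q\<bar> \<le> D*(real n+2)" unfolding D_def by (simp add: algebra_simps)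
  qed auto
  finally have "\<bar>p0*(real n+1)*x + (p1*real n+q)*y\<bar> \<le> D*(real n+2)*(\<bar>x\<bar>+\<bar>y\<bar>)" by (simp add: algebra_simps)
  then have "\<bar>p0*(real n+1)*x + (p1*real n+q)*y\<bar>/((real n+2)*(real n+1)) \<le> D*(real n+2)*(\<bar>x\<bar>+\<bar>y\<bar>)/((real n+2)*(real n+1))"
    using pos by (intro divide_right_mono) auto
  also have "\<dots> = D/(real n+1)*(\<bar>x\<bar>+\<bar>y\<bar>)"
  proof -
    have "(real n+2) \<noteq> 0" by simp
    then show ?thesis by (simp only: mult.assoc[symmetric] mult.commute[of "D*(real n+2)"] divide_divide_eq_left[symmetric]) (simp add: mult.commute)
  qed
  finally show ?thesis using pos by (simp add: D_def abs_divide)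
qed

fun cf :: "real \<Rightarrow> real \<Rightarrow> real \<Rightarrow> real \<Rightarrow> nat \<Rightarrow> real" where
  "cf p0 p1 c1 q 0 = 1"
| "cf p0 p1 c1 q (Suc 0) = c1"
| "cf p0 p1 c1 q (Suc (Suc n)) = (p0*(real n+1)*cf p0 p1 c1 q (Suc n) + (p1*real n+q)*cf p0 p1 c1 q n)/((real n+2)*(real n+1))"

context fixes p0 p1 c1 :: real begin

abbreviation "c \<equiv> cf p0 p1 c1"

lemma cf_bnd:
  assumes R: "R \<ge> 1" and q: "\<bar>q\<bar> \<le> B"
  shows "\<bar>c q n\<bar> * R^n \<le> KB (max 1 \<bar>c1\<bar>) (\<bar>p0\<bar>+\<bar>p1\<bar>+B) R * (3/4)^n"
proof (rule coef_bound[OF R])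
  show "0 \<le> \<bar>p0\<bar>+\<bar>p1\<bar>+B" using q by linarith
  show "\<bar>c q 0\<bar> \<le> max 1 \<bar>c1\<bar>" by simp
  show "\<bar>c q 1\<bar> \<le> max 1 \<bar>c1\<bar>" by simp
  fix n
  have "\<bar>c q (n+2)\<bar> \<le> (\<bar>p0\<bar>+\<bar>p1\<bar>+\<bar>q\<bar>)/(real n+1)*(\<bar>c q (n+1)\<bar>+\<bar>c q n\<bar>)"
    using rec_ineq[of p0 n "c q (Suc n)" p1 q "c q n"] by (simp add: numeral_2_eq_2)
  also have "\<dots> \<le> (\<bar>p0\<bar>+\<bar>p1\<bar>+B)/(real n+1)*(\<bar>c q (n+1)\<bar>+\<bar>c q n\<bar>)"
    using q by (intro mult_right_mono divide_right_mono) auto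
  finally show "\<bar>c q (n+2)\<bar> \<le> (\<bar>p0\<bar>+\<bar>p1\<bar>+B)/(real n+1)*(\<bar>c q (n+1)\<bar>+\<bar>c q n\<bar>)" .
qed

lemma summable_c: "summable (\<lambda>n. c q n * y^n)"
proof (rule summable_comparison_test'[where g = "\<lambda>n. KB (max 1 \<bar>c1\<bar>) (\<bar>p0\<bar>+\<bar>p1\<bar>+\<bar>q\<bar>) (max 1 \<bar>y\<bar>) * (3/4)^n"])
  show "summable (\<lambda>n. KB (max 1 \<bar>c1\<bar>) (\<bar>p0\<bar>+\<bar>p1\<bar>+\<bar>q\<bar>) (max 1 \<bar>y\<bar>) * (3/4::real)^n)"
    by (intro summable_mult summable_geometric) auto
  fix n
  have "norm (c q n * y^n) = \<bar>c q n\<bar> * \<bar>y\<bar>^n" by (simp add: abs_mult power_abs)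
  also have "\<dots> \<le> \<bar>c q n\<bar> * (max 1 \<bar>y\<bar>)^n" by (intro mult_left_mono power_mono) auto
  also have "\<dots> \<le> KB (max 1 \<bar>c1\<bar>) (\<bar>p0\<bar>+\<bar>p1\<bar>+\<bar>q\<bar>) (max 1 \<bar>y\<bar>) * (3/4)^n"
    by (rule cf_bnd) auto
  finally show "norm (c q n * y^n) \<le> KB (max 1 \<bar>c1\<bar>) (\<bar>p0\<bar>+\<bar>p1\<bar>+\<bar>q\<bar>) (max 1 \<bar>y\<bar>) * (3/4)^n" .
qed

definition "W q y = (\<Sum>n. c q n * y^n)"
definition "W1 q y = (\<Sum>n. diffs (c q) n * y^n)"
definition "W2 q y = (\<Sum>n. diffs (diffs (c q)) n * y^n)"

lemma summable_c1: "summable (\<lambda>n. diffs (c q) n * y^n)"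
  by (rule termdiff_converges_all) (rule summable_c)
lemma summable_c2: "summable (\<lambda>n. diffs (diffs (c q)) n * y^n)"
  by (rule termdiff_converges_all) (rule summable_c1)

lemma W_deriv: "(W q has_real_derivative W1 q y) (at y)"
  unfolding W_def[abs_def] W1_def
  by (rule termdiffs_strong_converges_everywhere) (rule summable_c)
lemma W1_deriv: "(W1 q has_real_derivative W2 q y) (at y)"
  unfolding W1_def[abs_def] W2_def
  by (rule termdiffs_strong_converges_everywhere) (rule summable_c1)

lemma W_ode: "W2 q y = (p0 + p1*y) * W1 q y + q * W q y"
proof -
  have trm: "diffs (diffs (c q)) n = p0 * diffs (c q) n + p1 * (real n * c q n) + q * c q n" for n
  proof -
    have "diffs (diffs (c q)) n = (real n+2)*(real n+1) * c q (Suc (Suc n))"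
      unfolding diffs_def by (simp del: cf.simps add: algebra_simps)
    also have "\<dots> = (real n+2)*(real n+1) * ((p0*(real n+1)*c q (Suc n) + (p1*real n+q)*c q n)/((real n+2)*(real n+1)))"
      by (simp only: cf.simps)
    also have "\<dots> = p0*(real n+1)*c q (Suc n) + (p1*real n+q)*c q n"
    proof -
      have nz: "(real n+2)*(real n+1) \<noteq> 0" by simp
      then show ?thesis by (simp only: times_divide_eq_right nonzero_mult_div_cancel_left[OF nz])
    qed
    also have "\<dots> = p0 * diffs (c q) n + p1 * (real n * c q n) + q * c q n"
      by (simp add: diffs_def algebra_simps)
    finally show ?thesis .
  qed
  have s1: "(\<lambda>n. diffs (c q) n * y^n) sums W1 q y" unfolding W1_def using summable_c1 by (simp add: summable_sums)
  have s0: "(\<lambda>n. c q n * y^n) sums W q y" unfolding W_def using summable_c by (simp add: summable_sums)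
  have sn: "(\<lambda>n. (real n * c q n) * y^n) sums (y * W1 q y)"
  proof -
    have "(\<lambda>n. y * (diffs (c q) n * y^n)) sums (y * W1 q y)" by (rule sums_mult[OF s1])
    then have "(\<lambda>n. (real (Suc n) * c q (Suc n)) * y^(Suc n)) sums (y * W1 q y)"
      by (simp add: diffs_def algebra_simps)
    then have "(\<lambda>n. real n * c q n * y^n) sums (y * W1 q y + real 0 * c q 0 * y^0)"
      using sums_Suc_iff[of "\<lambda>n. real n * c q n * y^n" "y * W1 q y"] by simp
    then show ?thesis by simp
  qed
  have "(\<lambda>n. diffs (diffs (c q)) n * y^n) sums (p0 * W1 q y + p1 * (y * W1 q y) + q * W q y)"
  proof -
    have "(\<lambda>n. p0 * (diffs (c q) n * y^n) + p1 * ((real n * c q n) * y^n) + q * (c q n * y^n)) sums (p0 * W1 q y + p1 * (y * W1 q y) + q * W q y)"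
      by (intro sums_add sums_mult s1 sn s0)
    then show ?thesis by (simp add: trm algebra_simps)
  qed
  then have "W2 q y = p0 * W1 q y + p1 * (y * W1 q y) + q * W q y"
    unfolding W2_def by (rule sums_unique[symmetric])
  then show ?thesis by (simp add: algebra_simps)
qed

end

lemma ps_cont:
  fixes a :: "real \<Rightarrow> nat \<Rightarrow> real"
  assumes ac: "\<And>n. continuous_on UNIV (\<lambda>q. a q n)"
  and bd: "\<And>z0. \<exists>M. summable M \<and> (\<forall>z\<in>cball z0 1. \<forall>n. \<bar>a (fst z) n * snd z ^ n\<bar> \<le> M n)"
  shows "continuous_on UNIV (\<lambda>z::real\<times>real. \<Sum>n. a (fst z) n * snd z ^ n)"
proof (rule continuous_at_imp_continuous_on, intro ballI)
  fix z0 :: "real \<times> real"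
  obtain M where M: "summable M" "\<forall>z\<in>cball z0 1. \<forall>n. \<bar>a (fst z) n * snd z ^ n\<bar> \<le> M n"
    using bd by blast
  have ul: "uniform_limit (cball z0 1) (\<lambda>N z. \<Sum>i<N. a (fst z) i * snd z ^ i) (\<lambda>z. \<Sum>i. a (fst z) i * snd z ^ i) sequentially"
    by (rule Weierstrass_m_test) (use M in auto)
  have "continuous_on (cball z0 1) (\<lambda>z. \<Sum>i. a (fst z) i * snd z ^ i)"
  proof (rule uniform_limit_theorem[OF _ ul])
    show "\<forall>\<^sub>F N in sequentially. continuous_on (cball z0 1) (\<lambda>z. \<Sum>i<N. a (fst z) i * snd z ^ i)"
    proof (intro always_eventually allI continuous_on_sum continuous_on_mult continuous_on_power continuous_on_snd continuous_on_id)
      fix N i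
      show "continuous_on (cball z0 1) (\<lambda>z. a (fst z) i)"
        by (rule continuous_on_compose2[OF ac[of i] continuous_on_fst[OF continuous_on_id]]) auto
    qed
  qed simp
  then show "isCont (\<lambda>z. \<Sum>i. a (fst z) i * snd z ^ i) z0"
    by (rule continuous_on_interior) simp
qed

lemma suc_le_pow2: "real (Suc n) \<le> 2^n"
proof (induction n)
  case (Suc n)
  have "real (Suc (Suc n)) \<le> 2 * real (Suc n)" by simp
  also have "\<dots> \<le> 2 * 2^n" using Suc by simp
  finally show ?case by simp
qed simp

context fixes p0 p1 c1 :: real begin

lemma c_cont: "continuous_on UNIV (\<lambda>q. cf p0 p1 c1 q n)"
proof -
  have "continuous_on UNIV (\<lambda>q. cf p0 p1 c1 q n) \<and> continuous_on UNIV (\<lambda>q. cf p0 p1 c1 q (Suc n))"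
  proof (induction n)
    case (Suc n)
    then show ?case by (simp del: of_nat_Suc) (intro continuous_intros, auto)
  qed simp
  then show ?thesis by blast
qed

lemma cbox_bnd:
  fixes z z0 :: "real \<times> real"
  assumes "z \<in> cball z0 1"
  shows "\<bar>fst z\<bar> \<le> \<bar>fst z0\<bar> + 1" "\<bar>snd z\<bar> \<le> \<bar>snd z0\<bar> + 1"
proof -
  have "dist (fst z) (fst z0) \<le> 1" "dist (snd z) (snd z0) \<le> 1"
    using assms dist_fst_le[of z z0] dist_snd_le[of z z0] by (auto simp: dist_commute)
  then show "\<bar>fst z\<bar> \<le> \<bar>fst z0\<bar> + 1" by (auto simp: dist_real_def)
  from \<open>dist (snd z) (snd z0) \<le> 1\<close> show "\<bar>snd z\<bar> \<le> \<bar>snd z0\<bar> + 1" by (auto simp: dist_real_def)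
qed

lemma W_cont: "continuous_on UNIV (\<lambda>z. W p0 p1 c1 (fst z) (snd z))"
  unfolding W_def
proof (rule ps_cont[OF c_cont])
  fix z0 :: "real\<times>real"
  define R where "R = max 1 (\<bar>snd z0\<bar> + 1)"
  define K where "K = KB (max 1 \<bar>c1\<bar>) (\<bar>p0\<bar>+\<bar>p1\<bar>+(\<bar>fst z0\<bar> + 1)) R"
  show "\<exists>M. summable M \<and> (\<forall>z\<in>cball z0 1. \<forall>n. \<bar>cf p0 p1 c1 (fst z) n * snd z ^ n\<bar> \<le> M n)"
  proof (intro exI conjI ballI allI)
    show "summable (\<lambda>n. K * (3/4::real)^n)" by (intro summable_mult summable_geometric) auto
    fix z n assume z: "z \<in> cball z0 1"
    have "\<bar>cf p0 p1 c1 (fst z) n * snd z ^ n\<bar> = \<bar>cf p0 p1 c1 (fst z) n\<bar> * \<bar>snd z\<bar>^n" by (simp add: abs_mult power_abs)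
    also have "\<dots> \<le> \<bar>cf p0 p1 c1 (fst z) n\<bar> * R^n"
      using cbox_bnd[OF z] by (intro mult_left_mono power_mono) (auto simp: R_def)
    also have "\<dots> \<le> K * (3/4)^n" unfolding K_def
      by (rule cf_bnd) (use cbox_bnd[OF z] in \<open>auto simp: R_def\<close>)
    finally show "\<bar>cf p0 p1 c1 (fst z) n * snd z ^ n\<bar> \<le> K * (3/4)^n" .
  qed
qed

lemma W1_cont: "continuous_on UNIV (\<lambda>z. W1 p0 p1 c1 (fst z) (snd z))"
  unfolding W1_def
proof (rule ps_cont)
  fix n
  show "continuous_on UNIV (\<lambda>q. diffs (cf p0 p1 c1 q) n)"
    unfolding diffs_def by (intro continuous_intros c_cont)
next
  fix z0 :: "real\<times>real"
  define R where "R = max 1 (\<bar>snd z0\<bar> + 1)"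
  define K where "K = KB (max 1 \<bar>c1\<bar>) (\<bar>p0\<bar>+\<bar>p1\<bar>+(\<bar>fst z0\<bar> + 1)) (2*R)"
  show "\<exists>M. summable M \<and> (\<forall>z\<in>cball z0 1. \<forall>n. \<bar>diffs (cf p0 p1 c1 (fst z)) n * snd z ^ n\<bar> \<le> M n)"
  proof (intro exI conjI ballI allI)
    show "summable (\<lambda>n. K * (3/4::real)^(Suc n))" by (intro summable_mult summable_geometric summable_Suc_iff[THEN iffD2]) auto
    fix z n assume z: "z \<in> cball z0 1"
    have R1: "R \<ge> 1" by (simp add: R_def)
    have "\<bar>diffs (cf p0 p1 c1 (fst z)) n * snd z ^ n\<bar> = real (Suc n) * (\<bar>cf p0 p1 c1 (fst z) (Suc n)\<bar> * \<bar>snd z\<bar>^n)"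
      by (simp add: diffs_def abs_mult power_abs)
    also have "\<dots> \<le> 2^n * (\<bar>cf p0 p1 c1 (fst z) (Suc n)\<bar> * R^n)"
      using cbox_bnd[OF z] suc_le_pow2[of n]
      by (intro mult_mono mult_left_mono power_mono) (auto simp: R_def)
    also have "\<dots> = \<bar>cf p0 p1 c1 (fst z) (Suc n)\<bar> * (2*R)^n" by (simp add: power_mult_distrib)
    also have "\<dots> \<le> \<bar>cf p0 p1 c1 (fst z) (Suc n)\<bar> * (2*R)^(Suc n)"
      using R1 by (intro mult_left_mono power_increasing) auto
    also have "\<dots> \<le> K * (3/4)^(Suc n)" unfolding K_def
      by (rule cf_bnd) (use cbox_bnd[OF z] R1 in \<open>auto\<close>)
    finally show "\<bar>diffs (cf p0 p1 c1 (fst z)) n * snd z ^ n\<bar> \<le> K * (3/4)^(Suc n)" .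
  qed
qed

end

lemma first_cross:
  fixes g :: "real \<Rightarrow> real"
  assumes ab: "a \<le> b" and cont: "continuous_on {a..b} g" and ga: "g a > 0" and gb: "g b \<le> 0"
  shows "\<exists>z. a < z \<and> z \<le> b \<and> g z = 0 \<and> (\<forall>t. a \<le> t \<and> t < z \<longrightarrow> g t > 0)"
proof -
  define S where "S = {a..b} \<inter> g -` {..0}"
  have cl: "closed S" unfolding S_def by (rule continuous_closed_preimage[OF cont]) auto
  have ne: "S \<noteq> {}" using gb ab by (auto simp: S_def)
  have bb: "bdd_below S" unfolding S_def by (rule bdd_belowI[of _ a]) auto
  define z where "z = Inf S"
  have zS: "z \<in> S" unfolding z_def by (rule closed_contains_Inf[OF ne bb cl])
  have za: "a \<le> z" "z \<le> b" and gz: "g z \<le> 0" using zS by (auto simp: S_def)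
  have below: "g t > 0" if "a \<le> t" "t < z" for t
  proof (rule ccontr)
    assume "\<not> g t > 0"
    then have "t \<in> S" using that za by (auto simp: S_def)
    then have "z \<le> t" unfolding z_def by (rule cInf_lower[OF _ bb])
    then show False using that by simp
  qed
  have "z \<noteq> a" using gz ga by auto
  with za have az: "a < z" by simp
  have "\<exists>x. a \<le> x \<and> x \<le> z \<and> g x = 0"
    by (rule IVT2') (use gz ga az za in \<open>auto intro!: continuous_on_subset[OF cont]\<close>)
  then obtain x where x: "a \<le> x" "x \<le> z" "g x = 0" by blast
  have "x = z" using below[of x] x by force
  then show ?thesis using x az za below by blast
qed

lemma last_cross:
  fixes g :: "real \<Rightarrow> real"
  assumes ab: "a \<le> b" and cont: "continuous_on {a..b} g" and ga: "g a \<le> 0" and gb: "g b > 0"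
  shows "\<exists>s. a \<le> s \<and> s < b \<and> g s = 0 \<and> (\<forall>t. s < t \<and> t \<le> b \<longrightarrow> g t > 0)"
proof -
  define S where "S = {a..b} \<inter> g -` {..0}"
  have cl: "closed S" unfolding S_def by (rule continuous_closed_preimage[OF cont]) auto
  have ne: "S \<noteq> {}" using ga ab by (auto simp: S_def)
  have bb: "bdd_above S" unfolding S_def by (rule bdd_aboveI[of _ b]) auto
  define s where "s = Sup S"
  have sS: "s \<in> S" unfolding s_def by (rule closed_contains_Sup[OF ne bb cl])
  have sa: "a \<le> s" "s \<le> b" and gs: "g s \<le> 0" using sS by (auto simp: S_def)
  have above: "g t > 0" if "s < t" "t \<le> b" for t
  proof (rule ccontr)
    assume "\<not> g t > 0"
    then have "t \<in> S" using that sa by (auto simp: S_def)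
    then have "t \<le> s" unfolding s_def by (rule cSup_upper[OF _ bb])
    then show False using that by simp
  qed
  have "s \<noteq> b" using gs gb by auto
  with sa have sb: "s < b" by simp
  have "\<exists>x. s \<le> x \<and> x \<le> b \<and> g x = 0"
    by (rule IVT') (use gs gb sb sa in \<open>auto intro!: continuous_on_subset[OF cont]\<close>)
  then obtain x where x: "s \<le> x" "x \<le> b" "g x = 0" by blast
  have "x = s" using above[of x] x by force
  then show ?thesis using x sb sa above by blast
qed


locale prob =
  fixes \<sigma> \<eta> \<alpha> h r a :: real
  assumes sp: "\<sigma> > 0" and ep: "\<eta> > 0" and ap: "\<alpha> > 0" and hp: "h > 0" and rp: "r \<ge> 0"
begin

definition "kk = \<sigma>^2/2"
definition "lam = -\<alpha> * h/(4 * kk * \<eta>)"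
definition "P0 = -a/kk - 2 * lam"
definition "P1 = \<eta>/kk"
definition "C1 = \<alpha> * (r + h/\<eta>)/(4 * kk)"
definition "Q \<beta> = -\<alpha> * \<beta>/(4 * kk^2) - lam^2 - a * lam/kk"
definition "w \<beta> y = W P0 P1 C1 (Q \<beta>) y"
definition "w1 \<beta> y = W1 P0 P1 C1 (Q \<beta>) y"
definition "w2 \<beta> y = W2 P0 P1 C1 (Q \<beta>) y"
definition "V \<beta> y = -(4 * kk/\<alpha>) * (lam + w1 \<beta> y / w \<beta> y)"
definition "F \<beta> y v = \<beta> + \<alpha>/4 * v^2 + \<eta> * y * (v - h/\<eta>) - a * v"
definition "G \<beta> y = F \<beta> y (V \<beta> y)"

lemma kkp: "kk > 0" using sp by (simp add: kk_def)

lemma w_deriv: "(w \<beta> has_real_derivative w1 \<beta> y) (at y)"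
  unfolding w_def[abs_def] w1_def by (rule W_deriv)
lemma w1_deriv: "(w1 \<beta> has_real_derivative w2 \<beta> y) (at y)"
  unfolding w1_def[abs_def] w2_def by (rule W1_deriv)
lemma w_ode: "w2 \<beta> y = (P0 + P1 * y) * w1 \<beta> y + Q \<beta> * w \<beta> y"
  unfolding w_def w1_def w2_def by (rule W_ode)

lemma w0: "w \<beta> 0 = 1" unfolding w_def W_def by simp
lemma w10: "w1 \<beta> 0 = C1" unfolding w1_def W1_def by (simp add: diffs_def)

lemma V0: "V \<beta> 0 = -r"
  using kkp ep ap unfolding V_def w0 w10 lam_def C1_def by (simp add: field_simps)

lemma w1_eq: "w \<beta> y \<noteq> 0 \<Longrightarrow> w1 \<beta> y = -(\<alpha>/(4 * kk)) * (V \<beta> y - h/\<eta>) * w \<beta> y"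
  using kkp ep ap unfolding V_def lam_def by (simp add: field_simps)

lemma V_deriv:
  assumes "w \<beta> y \<noteq> 0"
  shows "(V \<beta> has_real_derivative G \<beta> y / kk) (at y)"
proof -
  have d: "((\<lambda>y. w1 \<beta> y / w \<beta> y) has_real_derivative (w2 \<beta> y * w \<beta> y - w1 \<beta> y * w1 \<beta> y) / (w \<beta> y * w \<beta> y)) (at y)"
    using DERIV_divide[OF w1_deriv w_deriv assms] .
  have "(V \<beta> has_real_derivative -(4 * kk/\<alpha>) * ((w2 \<beta> y * w \<beta> y - w1 \<beta> y * w1 \<beta> y) / (w \<beta> y * w \<beta> y))) (at y)"
    unfolding V_def[abs_def]
    using DERIV_cmult[OF DERIV_add[OF DERIV_const d], of "-(4 * kk/\<alpha>)" lam] by simp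
  moreover have "-(4 * kk/\<alpha>) * ((w2 \<beta> y * w \<beta> y - w1 \<beta> y * w1 \<beta> y) / (w \<beta> y * w \<beta> y)) = G \<beta> y / kk"
    using assms kkp ep ap
    unfolding w_ode G_def F_def V_def Q_def P0_def P1_def lam_def
    by (simp add: field_simps power2_eq_square)
  ultimately show ?thesis by simp
qed


lemma G_deriv:
  assumes "w \<beta> y \<noteq> 0"
  shows "(G \<beta> has_real_derivative (\<eta> * V \<beta> y - h) + (\<alpha>/2 * V \<beta> y + \<eta> * y - a) * (G \<beta> y / kk)) (at y)"
proof -
  define Vd where "Vd = G \<beta> y / kk"
  have dV: "(V \<beta> has_real_derivative Vd) (at y)" unfolding Vd_def by (rule V_deriv[OF assms])
  have "((\<lambda>y. F \<beta> y (V \<beta> y)) has_real_derivative \<alpha>/4 * (2 * V \<beta> y * Vd) + (\<eta> * (V \<beta> y - h/\<eta>) + \<eta> * y * Vd) - a * Vd) (at y)"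
    unfolding F_def
    by (intro derivative_eq_intros dV) (use dV in \<open>auto simp: power2_eq_square\<close>)
  then have "(G \<beta> has_real_derivative \<alpha>/4 * (2 * V \<beta> y * (G \<beta> y / kk)) + (\<eta> * (V \<beta> y - h/\<eta>) + \<eta> * y * (G \<beta> y / kk)) - a * (G \<beta> y / kk)) (at y)"
    unfolding Vd_def G_def[abs_def] .
  moreover have "\<alpha>/4 * (2 * V \<beta> y * (G \<beta> y / kk)) + (\<eta> * (V \<beta> y - h/\<eta>) + \<eta> * y * (G \<beta> y / kk)) - a * (G \<beta> y / kk)
     = (\<eta> * V \<beta> y - h) + (\<alpha>/2 * V \<beta> y + \<eta> * y - a) * (G \<beta> y / kk)"
  proof -
    have "\<eta> * (V \<beta> y - h/\<eta>) = \<eta> * V \<beta> y - h" using ep by (simp add: right_diff_distrib)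
    then show ?thesis by (simp add: algebra_simps)
  qed
  ultimately show ?thesis by simp
qed

definition "Dp \<beta> y \<longleftrightarrow> (\<forall>t. 0 \<le> t \<and> t \<le> y \<longrightarrow> w \<beta> t > 0)"

lemma w_cont: "isCont (w \<beta>) y" using w_deriv DERIV_isCont by blast
lemma V_cont: "w \<beta> y \<noteq> 0 \<Longrightarrow> isCont (V \<beta>) y" using V_deriv DERIV_isCont by blast
lemma G_cont: "w \<beta> y \<noteq> 0 \<Longrightarrow> isCont (G \<beta>) y" using G_deriv DERIV_isCont by blast

lemma Dp_sub: "Dp \<beta> y \<Longrightarrow> 0 \<le> t \<Longrightarrow> t \<le> y \<Longrightarrow> w \<beta> t \<noteq> 0"
  unfolding Dp_def by force

lemma Dp_mono: "Dp \<beta> y \<Longrightarrow> t \<le> y \<Longrightarrow> Dp \<beta> t"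
  unfolding Dp_def by auto

lemma V_cont_on: "Dp \<beta> y \<Longrightarrow> 0 \<le> a1 \<Longrightarrow> b1 \<le> y \<Longrightarrow> continuous_on {a1..b1} (V \<beta>)"
proof (intro continuous_at_imp_continuous_on ballI V_cont)
  fix x assume "Dp \<beta> y" "0 \<le> a1" "b1 \<le> y" "x \<in> {a1..b1}"
  then show "w \<beta> x \<noteq> 0" using Dp_sub[of \<beta> y x] by auto
qed
lemma G_cont_on: "Dp \<beta> y \<Longrightarrow> 0 \<le> a1 \<Longrightarrow> b1 \<le> y \<Longrightarrow> continuous_on {a1..b1} (G \<beta>)"
proof (intro continuous_at_imp_continuous_on ballI G_cont)
  fix x assume "Dp \<beta> y" "0 \<le> a1" "b1 \<le> y" "x \<in> {a1..b1}"
  then show "w \<beta> x \<noteq> 0" using Dp_sub[of \<beta> y x] by auto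
qed

lemma V_mono_on:
  assumes "Dp \<beta> y" "0 \<le> a1" "a1 \<le> b1" "b1 \<le> y" "\<And>t. a1 \<le> t \<Longrightarrow> t \<le> b1 \<Longrightarrow> G \<beta> t \<ge> 0"
  shows "V \<beta> a1 \<le> V \<beta> b1"
proof (rule DERIV_nonneg_imp_nondecreasing[OF assms(3)])
  fix x assume x: "a1 \<le> x" "x \<le> b1"
  show "\<exists>d. (V \<beta> has_real_derivative d) (at x) \<and> 0 \<le> d"
    using V_deriv[of \<beta> x] Dp_sub[OF assms(1), of x] assms(5)[OF x] x assms kkp
    by (intro exI[of _ "G \<beta> x / kk"]) auto
qed

lemma V_anti_on:
  assumes "Dp \<beta> y" "0 \<le> a1" "a1 \<le> b1" "b1 \<le> y" "\<And>t. a1 \<le> t \<Longrightarrow> t \<le> b1 \<Longrightarrow> G \<beta> t \<le> 0"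
  shows "V \<beta> a1 \<ge> V \<beta> b1"
proof (rule DERIV_nonpos_imp_nonincreasing[OF assms(3)])
  fix x assume x: "a1 \<le> x" "x \<le> b1"
  show "\<exists>d. (V \<beta> has_real_derivative d) (at x) \<and> d \<le> 0"
    using V_deriv[of \<beta> x] Dp_sub[OF assms(1), of x] assms(5)[OF x] x assms kkp
    by (intro exI[of _ "G \<beta> x / kk"]) (auto simp: divide_nonpos_pos)
qed

lemma Sp_persist:
  assumes y0: "0 \<le> y0" "y0 \<le> y2" and D: "Dp \<beta> y2" and V0: "V \<beta> y0 > h/\<eta>" and G0: "G \<beta> y0 > 0"
  shows "G \<beta> y2 > 0 \<and> V \<beta> y2 > h/\<eta>"
proof -
  have Gpos: "G \<beta> t > 0" if t: "y0 \<le> t" "t \<le> y2" for t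
  proof (rule ccontr)
    assume "\<not> G \<beta> t > 0"
    then have "G \<beta> t \<le> 0" by simp
    from first_cross[OF t(1) G_cont_on[OF D] G0 this] y0 t
    obtain z where z: "y0 < z" "z \<le> t" "G \<beta> z = 0" "\<And>s. y0 \<le> s \<Longrightarrow> s < z \<Longrightarrow> G \<beta> s > 0"
      by auto
    have "V \<beta> y0 \<le> V \<beta> z"
      by (rule V_mono_on[OF D]) (use y0 z t in \<open>auto intro: less_imp_le simp: le_less\<close>)
    then have Vz: "V \<beta> z > h/\<eta>" using V0 by simp
    have wz: "w \<beta> z \<noteq> 0" using Dp_sub[OF D, of z] y0 z t by auto
    have "(G \<beta> has_real_derivative \<eta> * V \<beta> z - h) (at z)"
      using G_deriv[OF wz] z(3) by simp
    moreover have "\<eta> * V \<beta> z - h > 0" using Vz ep by (simp add: field_simps)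
    ultimately obtain d where d: "d > 0" "\<And>e. e > 0 \<Longrightarrow> e < d \<Longrightarrow> G \<beta> (z - e) < G \<beta> z"
      using DERIV_pos_inc_left by blast
    define e where "e = min (d/2) ((z - y0)/2)"
    have e: "e > 0" "e < d" using d z by (auto simp: e_def)
    have "e \<le> (z - y0)/2" unfolding e_def by (rule min.cobounded2)
    then have ez: "y0 \<le> z - e" "z - e < z" using e z(1) by auto
    have "G \<beta> (z - e) < 0" using d(2)[OF e] z(3) by simp
    moreover have "G \<beta> (z - e) > 0" using z(4)[OF ez] .
    ultimately show False by simp
  qed
  have "V \<beta> y0 \<le> V \<beta> y2"
    by (rule V_mono_on[OF D]) (use y0 Gpos in \<open>auto intro: less_imp_le\<close>)
  then show ?thesis using Gpos[of y2] y0 V0 by auto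
qed

lemma Sm_persist:
  assumes y0: "0 \<le> y0" "y0 \<le> y2" and D: "Dp \<beta> y2" and V0: "V \<beta> y0 < h/\<eta>" and G0: "G \<beta> y0 < 0"
  shows "G \<beta> y2 < 0 \<and> V \<beta> y2 < h/\<eta>"
proof -
  have Gneg: "G \<beta> t < 0" if t: "y0 \<le> t" "t \<le> y2" for t
  proof (rule ccontr)
    assume "\<not> G \<beta> t < 0"
    then have "- G \<beta> t \<le> 0" by simp
    have cont: "continuous_on {y0..t} (\<lambda>s. - G \<beta> s)"
      using G_cont_on[OF D] y0 t by (intro continuous_on_minus) auto
    from first_cross[OF t(1) cont _ \<open>- G \<beta> t \<le> 0\<close>] G0
    obtain z where z: "y0 < z" "z \<le> t" "G \<beta> z = 0" "\<And>s. y0 \<le> s \<Longrightarrow> s < z \<Longrightarrow> G \<beta> s < 0"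
      by auto
    have "V \<beta> y0 \<ge> V \<beta> z"
      by (rule V_anti_on[OF D]) (use y0 z t in \<open>auto intro: less_imp_le simp: le_less\<close>)
    then have Vz: "V \<beta> z < h/\<eta>" using V0 by simp
    have wz: "w \<beta> z \<noteq> 0" using Dp_sub[OF D, of z] y0 z t by auto
    have "(G \<beta> has_real_derivative \<eta> * V \<beta> z - h) (at z)"
      using G_deriv[OF wz] z(3) by simp
    moreover have "\<eta> * V \<beta> z - h < 0" using Vz ep by (simp add: field_simps)
    ultimately obtain d where d: "d > 0" "\<And>e. e > 0 \<Longrightarrow> e < d \<Longrightarrow> G \<beta> z < G \<beta> (z - e)"
      using DERIV_neg_dec_left by blast
    define e where "e = min (d/2) ((z - y0)/2)"
    have e: "e > 0" "e < d" using d z by (auto simp: e_def)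
    have "e \<le> (z - y0)/2" unfolding e_def by (rule min.cobounded2)
    then have ez: "y0 \<le> z - e" "z - e < z" using e z(1) by auto
    have "G \<beta> (z - e) > 0" using d(2)[OF e] z(3) by simp
    moreover have "G \<beta> (z - e) < 0" using z(4)[OF ez] .
    ultimately show False by simp
  qed
  have "V \<beta> y0 \<ge> V \<beta> y2"
    by (rule V_anti_on[OF D]) (use y0 Gneg in \<open>auto intro: less_imp_le\<close>)
  then show ?thesis using Gneg[of y2] y0 V0 by auto
qed

definition "Splus = {\<beta>. \<exists>y0\<ge>0. Dp \<beta> y0 \<and> V \<beta> y0 > h/\<eta> \<and> G \<beta> y0 > 0}"
definition "Sminus = {\<beta>. \<exists>y0\<ge>0. Dp \<beta> y0 \<and> V \<beta> y0 < h/\<eta> \<and> G \<beta> y0 < 0}"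

lemma S_disj: "Splus \<inter> Sminus = {}"
proof (rule ccontr)
  assume "Splus \<inter> Sminus \<noteq> {}"
  then obtain \<beta> y0 y1 where A: "y0 \<ge> 0" "Dp \<beta> y0" "V \<beta> y0 > h/\<eta>" "G \<beta> y0 > 0"
    and B: "y1 \<ge> 0" "Dp \<beta> y1" "V \<beta> y1 < h/\<eta>" "G \<beta> y1 < 0"
    unfolding Splus_def Sminus_def by blast
  show False
  proof (cases "y0 \<le> y1")
    case True
    then show False using Sp_persist[OF A(1) True B(2) A(3,4)] B(3) by simp
  next
    case False
    then show False using Sm_persist[OF B(1) _ A(2) B(3,4)] A(3) by simp
  qed
qed


lemma hp_pos: "h/\<eta> > 0" using hp ep by simp
lemma V0_lt: "V \<beta> 0 < h/\<eta>" using V0 rp hp_pos by simp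

lemma notSp_le:
  assumes nS: "\<beta> \<notin> Splus" and D: "Dp \<beta> y" and y: "0 \<le> y"
  shows "V \<beta> y \<le> h/\<eta>"
proof (rule ccontr)
  assume "\<not> V \<beta> y \<le> h/\<eta>"
  then have gy: "V \<beta> y - h/\<eta> > 0" by simp
  have cont: "continuous_on {0..y} (\<lambda>t. V \<beta> t - h/\<eta>)"
    using V_cont_on[OF D] by (intro continuous_on_diff continuous_on_const) auto
  have g0: "V \<beta> 0 - h/\<eta> \<le> 0" using V0_lt[of \<beta>] by linarith
  from last_cross[OF y cont g0 gy] obtain s where
    s: "0 \<le> s" "s < y" "V \<beta> s - h/\<eta> = 0" "\<And>t. s < t \<Longrightarrow> t \<le> y \<Longrightarrow> V \<beta> t - h/\<eta> > 0" by auto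
  have Gle: "G \<beta> t \<le> 0" if t: "s < t" "t \<le> y" for t
  proof (rule ccontr)
    assume "\<not> G \<beta> t \<le> 0"
    then have "\<beta> \<in> Splus" unfolding Splus_def using s(1) s(4)[OF t] t Dp_mono[OF D t(2)]
      by (intro CollectI exI[of _ t]) auto
    then show False using nS by simp
  qed
  have "V \<beta> s \<ge> V \<beta> y"
  proof (rule DERIV_nonpos_imp_decreasing_open[of s y "V \<beta>"])
    show "s \<le> y" using s by simp
    show "continuous_on {s..y} (V \<beta>)" using V_cont_on[OF D] s by simp
    fix x assume x: "s < x" "x < y"
    have "w \<beta> x \<noteq> 0" using Dp_sub[OF D, of x] x s by simp
    then show "\<exists>d. (V \<beta> has_real_derivative d) (at x) \<and> d \<le> 0"
      using V_deriv Gle[of x] x kkp by (intro exI[of _ "G \<beta> x / kk"]) (auto simp: divide_nonpos_pos)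
  qed
  then show False using s(3) gy by simp
qed

lemma w_cont_on: "continuous_on S (w \<beta>)"
  by (intro continuous_at_imp_continuous_on ballI w_cont)

lemma notSp_w:
  assumes nS: "\<beta> \<notin> Splus" and y: "0 \<le> y"
  shows "w \<beta> y > 0"
proof (rule ccontr)
  assume "\<not> w \<beta> y > 0"
  then have "w \<beta> y \<le> 0" by simp
  from first_cross[OF y w_cont_on _ this] w0
  obtain z where z: "0 < z" "z \<le> y" "w \<beta> z = 0" "\<And>t. 0 \<le> t \<Longrightarrow> t < z \<Longrightarrow> w \<beta> t > 0" by auto
  have "w \<beta> 0 \<le> w \<beta> z"
  proof (rule DERIV_nonneg_imp_increasing_open[of 0 z "w \<beta>"])
    show "0 \<le> z" using z by simp
    show "continuous_on {0..z} (w \<beta>)" by (rule w_cont_on)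
    fix x assume x: "0 < x" "x < z"
    have D: "Dp \<beta> x" unfolding Dp_def using z(4) x by auto
    have wx: "w \<beta> x > 0" using z(4) x by auto
    have "V \<beta> x \<le> h/\<eta>" using notSp_le[OF nS D] x by simp
    then have "\<alpha> * (V \<beta> x - h/\<eta>) \<le> 0" using ap by (simp add: mult_nonneg_nonpos)
    then have "\<alpha> * (V \<beta> x - h/\<eta>) * w \<beta> x \<le> 0" using wx by (simp add: mult_nonpos_nonneg)
    then have "\<alpha> * (V \<beta> x - h/\<eta>) * w \<beta> x / (4 * kk) \<le> 0" using kkp by (simp add: divide_nonpos_pos)
    then have "w1 \<beta> x \<ge> 0" using w1_eq[of \<beta> x] wx by simp
    then show "\<exists>d. (w \<beta> has_real_derivative d) (at x) \<and> 0 \<le> d"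
      using w_deriv by blast
  qed
  then show False using w0 z(3) by simp
qed

lemma notSp_D: "\<beta> \<notin> Splus \<Longrightarrow> Dp \<beta> y"
  unfolding Dp_def using notSp_w by auto

lemma good_G:
  assumes nS: "\<beta> \<notin> Splus" and nM: "\<beta> \<notin> Sminus" and y: "0 \<le> y"
  shows "G \<beta> y \<ge> 0"
proof -
  have D: "Dp \<beta> t" for t using notSp_D[OF nS] .
  have le: "V \<beta> t \<le> h/\<eta>" if "0 \<le> t" for t using notSp_le[OF nS D that] .
  show ?thesis
  proof (cases "V \<beta> y < h/\<eta>")
    case True
    show ?thesis
    proof (rule ccontr)
      assume "\<not> G \<beta> y \<ge> 0"
      then have "\<beta> \<in> Sminus" unfolding Sminus_def using True y D by auto
      then show False using nM by simp
    qed
  next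
    case False
    then have eq: "V \<beta> y = h/\<eta>" using le[OF y] by simp
    then have ypos: "y > 0" using y V0_lt[of \<beta>] by (cases "y = 0") auto
    have wy: "w \<beta> y \<noteq> 0" using notSp_w[OF nS y] by simp
    have "G \<beta> y / kk = 0"
    proof (rule DERIV_local_max[OF V_deriv[OF wy] ypos])
      show "\<forall>t. \<bar>y - t\<bar> < y \<longrightarrow> V \<beta> t \<le> V \<beta> y"
        using le eq by auto
    qed
    then show ?thesis using kkp by simp
  qed
qed

lemma good_mono:
  assumes nS: "\<beta> \<notin> Splus" and nM: "\<beta> \<notin> Sminus"
  shows "mono_on {0..} (V \<beta>)"
proof (rule mono_onI)
  fix x y :: real assume xy: "x \<in> {0..}" "y \<in> {0..}" "x \<le> y"
  show "V \<beta> x \<le> V \<beta> y"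
    by (rule V_mono_on[OF notSp_D[OF nS, of y]]) (use xy good_G[OF nS nM] in auto)
qed

lemma Sminus_ne: "(-(\<alpha>/4 * r^2) - a * r - 1) \<in> Sminus"
  unfolding Sminus_def
proof (intro CollectI exI[of _ 0] conjI)
  show "Dp (-(\<alpha>/4 * r^2) - a * r - 1) 0" unfolding Dp_def using w0 by auto
  show "V (-(\<alpha>/4 * r^2) - a * r - 1) 0 < h/\<eta>" by (rule V0_lt)
  show "G (-(\<alpha>/4 * r^2) - a * r - 1) 0 < 0" unfolding G_def F_def V0 by (simp add: power2_eq_square)
qed simp

lemma F_lower:
  assumes "0 \<le> y" "y \<le> 1"
  shows "F \<beta> y v \<ge> \<beta> - (\<eta> + \<bar>a\<bar>)^2/\<alpha> - h"
proof -
  define b where "b = \<eta> * y - a"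
  have Fe: "F \<beta> y v = \<beta> + (\<alpha>/4 * v^2 + b * v) - h * y"
    unfolding F_def b_def using ep by (simp add: field_simps)
  have q: "\<alpha>/4 * v^2 + b * v + b^2/\<alpha> \<ge> 0"
  proof -
    have "0 \<le> (\<alpha> * v + 2 * b)^2 / (4 * \<alpha>)" using ap by simp
    also have "(\<alpha> * v + 2 * b)^2 / (4 * \<alpha>) = \<alpha>/4 * v^2 + b * v + b^2/\<alpha>"
      using ap by (simp add: field_simps power2_eq_square)
    finally show ?thesis .
  qed
  have "\<bar>b\<bar> \<le> \<eta> + \<bar>a\<bar>"
  proof -
    have "\<eta> * y \<le> \<eta>" using assms ep by (simp add: mult_left_le)
    moreover have "\<eta> * y \<ge> 0" using assms ep by simp
    ultimately show ?thesis unfolding b_def by linarith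
  qed
  then have "b^2 \<le> (\<eta> + \<bar>a\<bar>)^2" by (metis abs_le_square_iff abs_of_nonneg abs_ge_zero order_trans ep less_imp_le add_nonneg_nonneg)
  then have "b^2/\<alpha> \<le> (\<eta> + \<bar>a\<bar>)^2/\<alpha>" using ap by (simp add: divide_right_mono)
  moreover have "h * y \<le> h" using assms hp by (simp add: mult_left_le)
  ultimately show ?thesis using Fe q by linarith
qed

lemma Splus_ne: "kk * (r + h/\<eta> + 1) + (\<eta> + \<bar>a\<bar>)^2/\<alpha> + h \<in> Splus" (is "?b \<in> Splus")
proof (rule ccontr)
  assume nS: "?b \<notin> Splus"
  have D: "Dp ?b 1" by (rule notSp_D[OF nS])
  have Gb: "G ?b t \<ge> kk * (r + h/\<eta> + 1)" if "0 \<le> t" "t \<le> 1" for t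
    unfolding G_def using F_lower[OF that, of ?b "V ?b t"] by simp
  have "V ?b 0 - (r + h/\<eta> + 1) * 0 \<le> V ?b 1 - (r + h/\<eta> + 1) * 1"
  proof (rule DERIV_nonneg_imp_nondecreasing[of 0 1 "\<lambda>t. V ?b t - (r + h/\<eta> + 1) * t"])
    fix x :: real assume x: "0 \<le> x" "x \<le> 1"
    have "w ?b x \<noteq> 0" using Dp_sub[OF D] x by simp
    have "((\<lambda>t. V ?b t - (r + h/\<eta> + 1) * t) has_real_derivative G ?b x / kk - (r + h/\<eta> + 1)) (at x)"
      by (intro derivative_eq_intros V_deriv[OF \<open>w ?b x \<noteq> 0\<close>]) (use V_deriv[OF \<open>w ?b x \<noteq> 0\<close>] in auto)
    moreover have "G ?b x / kk - (r + h/\<eta> + 1) \<ge> 0"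
      using Gb[OF x] kkp by (simp add: field_simps)
    ultimately show "\<exists>d. ((\<lambda>t. V ?b t - (r + h/\<eta> + 1) * t) has_real_derivative d) (at x) \<and> 0 \<le> d" by blast
  qed simp
  then have V1: "V ?b 1 > h/\<eta>" using V0[of ?b] by simp
  have G1: "G ?b 1 > 0" using Gb[of 1] kkp rp hp_pos by (smt (verit) mult_pos_pos)
  have "?b \<in> Splus" unfolding Splus_def using D V1 G1 by (intro CollectI exI[of _ 1]) auto
  then show False using nS by simp
qed


lemma Q_cont: "continuous_on UNIV (\<lambda>z::real\<times>real. (Q (fst z), snd z))"
  unfolding Q_def using kkp by (intro continuous_intros) auto

lemma wj_cont: "continuous_on UNIV (\<lambda>z. w (fst z) (snd z))"
proof -
  have "continuous_on UNIV (\<lambda>z. (\<lambda>u. W P0 P1 C1 (fst u) (snd u)) (Q (fst z), snd z))"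
    by (rule continuous_on_compose2[OF W_cont Q_cont]) auto
  then show ?thesis unfolding w_def by simp
qed

lemma w1j_cont: "continuous_on UNIV (\<lambda>z. w1 (fst z) (snd z))"
proof -
  have "continuous_on UNIV (\<lambda>z. (\<lambda>u. W1 P0 P1 C1 (fst u) (snd u)) (Q (fst z), snd z))"
    by (rule continuous_on_compose2[OF W1_cont Q_cont]) auto
  then show ?thesis unfolding w1_def by simp
qed

lemma w_beta_cont: "isCont (\<lambda>\<beta>. w \<beta> y0) \<beta>0"
proof -
  have "continuous_on UNIV (\<lambda>\<beta>. (\<lambda>z. w (fst z) (snd z)) (\<beta>, y0))"
    by (rule continuous_on_compose2[OF wj_cont]) (auto intro: continuous_intros)
  then show ?thesis by (simp add: continuous_on_eq_continuous_at)
qed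

lemma w1_beta_cont: "isCont (\<lambda>\<beta>. w1 \<beta> y0) \<beta>0"
proof -
  have "continuous_on UNIV (\<lambda>\<beta>. (\<lambda>z. w1 (fst z) (snd z)) (\<beta>, y0))"
    by (rule continuous_on_compose2[OF w1j_cont]) (auto intro: continuous_intros)
  then show ?thesis by (simp add: continuous_on_eq_continuous_at)
qed

lemma VG_beta_cont:
  assumes "w \<beta>0 y0 \<noteq> 0"
  shows "isCont (\<lambda>\<beta>. V \<beta> y0) \<beta>0" "isCont (\<lambda>\<beta>. G \<beta> y0) \<beta>0"
proof -
  show cV: "isCont (\<lambda>\<beta>. V \<beta> y0) \<beta>0"
    unfolding V_def using assms by (intro continuous_intros w_beta_cont w1_beta_cont) auto
  show "isCont (\<lambda>\<beta>. G \<beta> y0) \<beta>0"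
    unfolding G_def F_def by (intro continuous_intros cV)
qed

lemma Dp_nhds:
  assumes "Dp \<beta>0 y0" "0 \<le> y0"
  shows "eventually (\<lambda>\<beta>. Dp \<beta> y0) (nhds \<beta>0)"
proof -
  define Ow where "Ow = {z::real\<times>real. 0 < w (fst z) (snd z)}"
  have oO: "open Ow" unfolding Ow_def by (rule open_Collect_less[OF continuous_on_const wj_cont])
  have sub: "{\<beta>0} \<times> {0..y0} \<subseteq> Ow" using assms unfolding Ow_def Dp_def by auto
  obtain X0 where X0: "\<beta>0 \<in> X0" "open X0" "X0 \<times> {0..y0} \<subseteq> Ow"
    using Elementary_Topology.tube_lemma[OF compact_Icc oO sub] by blast
  have "eventually (\<lambda>\<beta>. \<beta> \<in> X0) (nhds \<beta>0)" by (rule eventually_nhds_in_open[OF X0(2) X0(1)])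
  then show ?thesis
  proof (rule eventually_mono)
    fix \<beta> assume "\<beta> \<in> X0"
    then show "Dp \<beta> y0" unfolding Dp_def
    proof (intro allI impI)
      fix t assume "\<beta> \<in> X0" "0 \<le> t \<and> t \<le> y0"
      then have "(\<beta>, t) \<in> X0 \<times> {0..y0}" by simp
      then have "(\<beta>, t) \<in> Ow" using X0(3) by (rule subsetD[rotated])
      then show "0 < w \<beta> t" unfolding Ow_def by simp
    qed
  qed
qed

lemma open_Splus: "open Splus"
  unfolding open_subopen[of Splus]
proof
  fix \<beta>0 assume "\<beta>0 \<in> Splus"
  then obtain y0 where y0: "y0 \<ge> 0" "Dp \<beta>0 y0" "V \<beta>0 y0 > h/\<eta>" "G \<beta>0 y0 > 0"
    unfolding Splus_def by blast
  have wz: "w \<beta>0 y0 \<noteq> 0" using Dp_sub[OF y0(2) y0(1)] by simp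
  have tV: "((\<lambda>\<beta>. V \<beta> y0) \<longlongrightarrow> V \<beta>0 y0) (nhds \<beta>0)"
    using VG_beta_cont(1)[OF wz] tendsto_at_iff_tendsto_nhds[of "\<lambda>\<beta>. V \<beta> y0" \<beta>0] by (simp add: isCont_def)
  have tG: "((\<lambda>\<beta>. G \<beta> y0) \<longlongrightarrow> G \<beta>0 y0) (nhds \<beta>0)"
    using VG_beta_cont(2)[OF wz] tendsto_at_iff_tendsto_nhds[of "\<lambda>\<beta>. G \<beta> y0" \<beta>0] by (simp add: isCont_def)
  have ev: "eventually (\<lambda>\<beta>. Dp \<beta> y0 \<and> V \<beta> y0 > h/\<eta> \<and> G \<beta> y0 > 0) (nhds \<beta>0)"
    by (rule eventually_conj[OF Dp_nhds[OF y0(2,1)] eventually_conj[OF order_tendstoD(1)[OF tV y0(3)] order_tendstoD(1)[OF tG y0(4)]]])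
  then obtain T where T: "open T" "\<beta>0 \<in> T" "\<forall>\<beta>\<in>T. Dp \<beta> y0 \<and> V \<beta> y0 > h/\<eta> \<and> G \<beta> y0 > 0"
    unfolding eventually_nhds by blast
  then have "T \<subseteq> Splus" unfolding Splus_def using y0(1) by blast
  then show "\<exists>T. open T \<and> \<beta>0 \<in> T \<and> T \<subseteq> Splus" using T by blast
qed

lemma open_Sminus: "open Sminus"
  unfolding open_subopen[of Sminus]
proof
  fix \<beta>0 assume "\<beta>0 \<in> Sminus"
  then obtain y0 where y0: "y0 \<ge> 0" "Dp \<beta>0 y0" "V \<beta>0 y0 < h/\<eta>" "G \<beta>0 y0 < 0"
    unfolding Sminus_def by blast
  have wz: "w \<beta>0 y0 \<noteq> 0" using Dp_sub[OF y0(2) y0(1)] by simp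
  have tV: "((\<lambda>\<beta>. V \<beta> y0) \<longlongrightarrow> V \<beta>0 y0) (nhds \<beta>0)"
    using VG_beta_cont(1)[OF wz] tendsto_at_iff_tendsto_nhds[of "\<lambda>\<beta>. V \<beta> y0" \<beta>0] by (simp add: isCont_def)
  have tG: "((\<lambda>\<beta>. G \<beta> y0) \<longlongrightarrow> G \<beta>0 y0) (nhds \<beta>0)"
    using VG_beta_cont(2)[OF wz] tendsto_at_iff_tendsto_nhds[of "\<lambda>\<beta>. G \<beta> y0" \<beta>0] by (simp add: isCont_def)
  have ev: "eventually (\<lambda>\<beta>. Dp \<beta> y0 \<and> V \<beta> y0 < h/\<eta> \<and> G \<beta> y0 < 0) (nhds \<beta>0)"
    by (rule eventually_conj[OF Dp_nhds[OF y0(2,1)] eventually_conj[OF order_tendstoD(2)[OF tV y0(3)] order_tendstoD(2)[OF tG y0(4)]]])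
  then obtain T where T: "open T" "\<beta>0 \<in> T" "\<forall>\<beta>\<in>T. Dp \<beta> y0 \<and> V \<beta> y0 < h/\<eta> \<and> G \<beta> y0 < 0"
    unfolding eventually_nhds by blast
  then have "T \<subseteq> Sminus" unfolding Sminus_def using y0(1) by blast
  then show "\<exists>T. open T \<and> \<beta>0 \<in> T \<and> T \<subseteq> Sminus" using T by blast
qed

lemma good_ex: "\<exists>\<beta>. \<beta> \<notin> Splus \<and> \<beta> \<notin> Sminus"
proof (rule ccontr)
  assume "\<not> ?thesis"
  then have cov: "UNIV \<subseteq> Splus \<union> Sminus" by blast
  have "Splus \<inter> UNIV = {} \<or> Sminus \<inter> UNIV = {}"
    by (rule connectedD[OF connected_UNIV open_Splus open_Sminus]) (use S_disj cov in auto)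
  then show False using Splus_ne Sminus_ne by blast
qed

end

lemma lin_lower:
  fixes f f' :: "real \<Rightarrow> real"
  assumes "a \<le> b" "\<And>t. a \<le> t \<Longrightarrow> t \<le> b \<Longrightarrow> (f has_real_derivative f' t) (at t) \<and> f' t \<ge> cst"
  shows "f b \<ge> f a + cst * (b - a)"
proof -
  have "f a - cst * a \<le> f b - cst * b"
  proof (rule DERIV_nonneg_imp_nondecreasing[of a b "\<lambda>t. f t - cst * t", OF assms(1)])
    fix x assume x: "a \<le> x" "x \<le> b"
    have "((\<lambda>t. f t - cst * t) has_real_derivative f' x - cst) (at x)"
      using assms(2)[OF x] by (auto intro!: derivative_eq_intros)
    then show "\<exists>y. ((\<lambda>t. f t - cst * t) has_real_derivative y) (at x) \<and> 0 \<le> y"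
      using assms(2)[OF x] by (intro exI[of _ "f' x - cst"]) auto
  qed
  then show ?thesis by (simp add: algebra_simps)
qed

lemma lin_upper:
  fixes f f' :: "real \<Rightarrow> real"
  assumes "a \<le> b" "\<And>t. a \<le> t \<Longrightarrow> t \<le> b \<Longrightarrow> (f has_real_derivative f' t) (at t) \<and> f' t \<le> cst"
  shows "f b \<le> f a + cst * (b - a)"
proof -
  have "(\<lambda>t. - f t) b \<ge> (\<lambda>t. - f t) a + (- cst) * (b - a)"
    by (rule lin_lower[where f' = "\<lambda>t. - f' t"]) (use assms in \<open>auto intro!: derivative_eq_intros\<close>)
  then show ?thesis by (simp add: algebra_simps)
qed

context prob begin

definition "solf \<beta> f f' \<longleftrightarrow> (\<forall>y\<ge>0. (f has_real_derivative f' y) (at y within {0..}) \<and> kk * f' y = F \<beta> y (f y))"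

lemma solf_at:
  assumes "solf \<beta> f f'" "y > 0"
  shows "(f has_real_derivative f' y) (at y)"
proof -
  have "y \<in> interior {0..}" using interior_Ici[of "-1::real" 0] assms(2) by simp
  then have "at y within {0..} = at y" by (rule at_within_interior)
  then show ?thesis using assms unfolding solf_def by (metis less_imp_le)
qed

lemma solf_kk: "solf \<beta> f f' \<Longrightarrow> y \<ge> 0 \<Longrightarrow> kk * f' y = F \<beta> y (f y)"
  unfolding solf_def by auto

lemma solf_eq: "solf \<beta> f f' \<Longrightarrow> y \<ge> 0 \<Longrightarrow> f' y = F \<beta> y (f y) / kk"
  unfolding solf_def using kkp by (auto simp: field_simps)

lemma sq_bound: "\<alpha>/4 * v^2 - a * v \<ge> -(a^2/\<alpha>)"
proof -
  have "0 \<le> (\<alpha> * v - 2 * a)^2 / (4 * \<alpha>)" using ap by simp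
  also have "(\<alpha> * v - 2 * a)^2 / (4 * \<alpha>) = \<alpha>/4 * v^2 - a * v + a^2/\<alpha>"
    using ap by (simp add: field_simps power2_eq_square)
  finally show ?thesis by simp
qed

lemma sol_le:
  assumes S: "solf \<beta> f f'" and M: "mono_on {0<..} f" and y1: "y1 > 0"
  shows "f y1 \<le> h/\<eta>"
proof (rule ccontr)
  assume "\<not> f y1 \<le> h/\<eta>"
  define \<delta> where "\<delta> = f y1 - h/\<eta>"
  have dp: "\<delta> > 0" using \<open>\<not> f y1 \<le> h/\<eta>\<close> by (simp add: \<delta>_def)
  have fge: "f y \<ge> f y1" if "y \<ge> y1" for y using mono_onD[OF M, of y1 y] y1 that by simp
  have kf: "kk * f' y \<ge> \<beta> - a^2/\<alpha> + \<eta> * y * \<delta>" if y: "y \<ge> y1" for y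
  proof -
    have "kk * f' y = \<beta> + (\<alpha>/4 * (f y)^2 - a * f y) + \<eta> * y * (f y - h/\<eta>)"
      using solf_kk[OF S, of y] y y1 unfolding F_def by (simp add: algebra_simps)
    moreover have "\<eta> * y * (f y - h/\<eta>) \<ge> \<eta> * y * \<delta>"
      using fge[OF y] y y1 ep by (intro mult_left_mono) (auto simp: \<delta>_def)
    ultimately show ?thesis using sq_bound[of "f y"] by linarith
  qed
  define Y1 where "Y1 = y1 + (kk + \<bar>\<beta> - a^2/\<alpha>\<bar>)/(\<eta> * \<delta>)"
  have Y1: "Y1 \<ge> y1" unfolding Y1_def using ep dp kkp by (simp add: divide_nonneg_pos)
  have f'1: "f' y \<ge> 1" if y: "y \<ge> Y1" for y
  proof -
    have "\<eta> * y * \<delta> \<ge> \<eta> * Y1 * \<delta>" using y ep dp by (intro mult_right_mono mult_left_mono) auto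
    also have "\<eta> * Y1 * \<delta> = \<eta> * y1 * \<delta> + (kk + \<bar>\<beta> - a^2/\<alpha>\<bar>)"
      unfolding Y1_def using ep dp by (simp add: field_simps)
    finally have "\<eta> * y * \<delta> \<ge> \<eta> * y1 * \<delta> + (kk + \<bar>\<beta> - a^2/\<alpha>\<bar>)" .
    moreover have "\<eta> * y1 * \<delta> \<ge> 0" using ep dp y1 by simp
    ultimately have "\<eta> * y * \<delta> \<ge> kk + \<bar>\<beta> - a^2/\<alpha>\<bar>" by linarith
    then have "kk * f' y \<ge> kk * 1" using kf[of y] y Y1 by linarith
    then show ?thesis using kkp by simp
  qed
  define W0 where "W0 = max 1 (8 * (\<bar>a\<bar> + \<bar>\<beta>\<bar>)/\<alpha>)"
  define Y2 where "Y2 = Y1 + W0 + \<bar>f Y1\<bar>"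
  have W01: "W0 \<ge> 1" by (simp add: W0_def)
  have Y2: "Y2 \<ge> Y1" unfolding Y2_def using W01 by simp
  have "f Y2 \<ge> f Y1 + 1 * (Y2 - Y1)"
  proof (rule lin_lower[OF Y2])
    fix t assume t: "Y1 \<le> t" "t \<le> Y2"
    show "(f has_real_derivative f' t) (at t) \<and> 1 \<le> f' t"
      using solf_at[OF S, of t] f'1[of t] t Y1 y1 by auto
  qed
  then have fY2: "f Y2 \<ge> W0" unfolding Y2_def by simp
  have fgeW: "f y \<ge> W0" if "y \<ge> Y2" for y
    using mono_onD[OF M, of Y2 y] that Y2 Y1 y1 fY2 by simp
  define k where "k = \<alpha>/(8 * kk)"
  have kp: "k > 0" unfolding k_def using ap kkp by simp
  have f'k: "f' y \<ge> k * (f y)^2" if y: "y \<ge> Y2" for y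
  proof -
    have fy: "f y \<ge> W0" by (rule fgeW[OF y])
    have f1: "f y \<ge> 1" using fy W01 by simp
    have "kk * f' y = \<beta> + (\<alpha>/4 * (f y)^2 - a * f y) + \<eta> * y * (f y - h/\<eta>)"
      using solf_kk[OF S, of y] y Y2 Y1 y1 unfolding F_def by (simp add: algebra_simps)
    moreover have "\<eta> * y * (f y - h/\<eta>) \<ge> 0"
      using fge[of y] y Y2 Y1 y1 ep dp by (intro mult_nonneg_nonneg) (auto simp: \<delta>_def)
    moreover have "\<alpha>/8 * (f y)^2 \<ge> \<bar>a\<bar> * f y + \<bar>\<beta>\<bar>"
    proof -
      have "8 * (\<bar>a\<bar> + \<bar>\<beta>\<bar>)/\<alpha> \<le> f y" using fy by (simp add: W0_def)
      then have "(\<bar>a\<bar> + \<bar>\<beta>\<bar>) \<le> \<alpha>/8 * f y" using ap by (simp add: field_simps)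
      then have "(\<bar>a\<bar> + \<bar>\<beta>\<bar>) * f y \<le> \<alpha>/8 * f y * f y" using f1 by (intro mult_right_mono) auto
      moreover have "\<bar>\<beta>\<bar> \<le> \<bar>\<beta>\<bar> * f y" using f1 by (simp add: mult_le_cancel_left1)
      ultimately show ?thesis by (simp add: power2_eq_square algebra_simps)
    qed
    moreover have "- a * f y \<ge> - \<bar>a\<bar> * f y" using f1 by (simp add: mult_right_mono)
    moreover have "\<beta> \<ge> - \<bar>\<beta>\<bar>" by simp
    ultimately have "kk * f' y \<ge> \<alpha>/8 * (f y)^2" by (simp add: algebra_simps)
    then have "f' y \<ge> \<alpha>/8 * (f y)^2 / kk" using kkp by (simp add: field_simps)
    then show ?thesis unfolding k_def using kkp by (simp add: field_simps)
  qed
  define T where "T = 2 / (k * f Y2)"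
  have fY2p: "f Y2 > 0" using fY2 W01 by simp
  have Tp: "T \<ge> 0" unfolding T_def using kp fY2p by simp
  have "(\<lambda>t. - 1 / f t) (Y2 + T) \<ge> (\<lambda>t. - 1 / f t) Y2 + k * ((Y2 + T) - Y2)"
  proof (rule lin_lower[where f' = "\<lambda>t. f' t / (f t)^2"])
    show "Y2 \<le> Y2 + T" using Tp by simp
    fix t assume t: "Y2 \<le> t" "t \<le> Y2 + T"
    have ft: "f t > 0" using fgeW[of t] t W01 by simp
    have "((\<lambda>t. - 1 / f t) has_real_derivative f' t / (f t)^2) (at t)"
      using solf_at[OF S, of t] t Y2 Y1 y1 ft
      by (auto intro!: derivative_eq_intros simp: power2_eq_square)
    moreover have "f' t / (f t)^2 \<ge> k" using f'k[of t] t ft by (simp add: field_simps)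
    ultimately show "((\<lambda>t. - 1 / f t) has_real_derivative f' t / (f t)^2) (at t) \<and> k \<le> f' t / (f t)^2" by simp
  qed
  then have "- 1 / f (Y2 + T) \<ge> - 1 / f Y2 + 2 / f Y2"
    unfolding T_def using kp fY2p by simp
  moreover have "- 1 / f Y2 + 2 / f Y2 > 0" using fY2p by (simp add: field_simps)
  ultimately have "- 1 / f (Y2 + T) > 0" by linarith
  moreover have "f (Y2 + T) > 0" using fgeW[of "Y2 + T"] Tp W01 by simp
  ultimately show False by (simp add: divide_less_0_iff)
qed


lemma sol_lim:
  assumes S: "solf \<beta> f f'" and M: "mono_on {0<..} f"
  shows "(f \<longlongrightarrow> h/\<eta>) at_top"
proof -
  define L where "L = Sup (f ` {0<..})"
  have bdd: "bdd_above (f ` {0<..})" using sol_le[OF S M] by (intro bdd_aboveI[of _ "h/\<eta>"]) auto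
  have fL: "f y \<le> L" if "y > 0" for y unfolding L_def by (rule cSup_upper[OF _ bdd]) (use that in auto)
  have Lle: "L \<le> h/\<eta>" unfolding L_def by (rule cSup_least) (use sol_le[OF S M] in auto)
  have lim: "(f \<longlongrightarrow> L) at_top"
  proof (rule order_tendstoI)
    fix b assume "b < L"
    have ne: "f ` {0<..} \<noteq> {}" by auto
    have "\<exists>x\<in>f ` {0<..}. b < x" using less_cSup_iff[OF ne bdd, of b] \<open>b < L\<close> unfolding L_def by simp
    then obtain y0 where y0: "y0 > 0" "f y0 > b" by auto
    show "eventually (\<lambda>y. b < f y) at_top"
      unfolding eventually_at_top_linorder
    proof (intro exI[of _ y0] allI impI)
      fix y assume "y \<ge> y0"
      then have "f y0 \<le> f y" using mono_onD[OF M, of y0 y] y0 by simp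
      then show "b < f y" using y0 by simp
    qed
  next
    fix b assume "b > L"
    show "eventually (\<lambda>y. f y < b) at_top"
      unfolding eventually_at_top_linorder
    proof (intro exI[of _ 1] allI impI)
      fix y :: real assume "y \<ge> 1"
      then have "f y \<le> L" using fL by simp
      then show "f y < b" using \<open>b > L\<close> by simp
    qed
  qed
  have "L = h/\<eta>"
  proof (rule ccontr)
    assume "L \<noteq> h/\<eta>"
    then have dp: "h/\<eta> - L > 0" using Lle by simp
    define \<delta> where "\<delta> = h/\<eta> - L"
    define M0 where "M0 = \<bar>f 1\<bar> + \<bar>L\<bar>"
    define Y3 where "Y3 = 1 + (\<bar>\<beta>\<bar> + \<alpha>/4 * M0^2 + \<bar>a\<bar> * M0 + kk)/(\<eta> * \<delta>)"
    have num: "\<bar>\<beta>\<bar> + \<alpha>/4 * M0^2 + \<bar>a\<bar> * M0 + kk \<ge> 0" using ap kkp by (simp add: M0_def)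
    have "\<eta> * \<delta> > 0" using ep dp by (simp add: \<delta>_def)
    then have Y3: "Y3 \<ge> 1" unfolding Y3_def using num by (simp add: divide_nonneg_pos)
    have f'n: "f' y \<le> -1" if y: "y \<ge> Y3" for y
    proof -
      have fy: "f 1 \<le> f y" "f y \<le> L" using mono_onD[OF M, of 1 y] fL[of y] y Y3 by auto
      then have aby: "\<bar>f y\<bar> \<le> M0" unfolding M0_def by linarith
      have "(f y)^2 \<le> M0^2" using aby by (metis abs_le_square_iff abs_of_nonneg abs_ge_zero order_trans)
      then have t1: "\<alpha>/4 * (f y)^2 \<le> \<alpha>/4 * M0^2" using ap by simp
      have t2: "a * f y \<ge> - (\<bar>a\<bar> * M0)"
      proof -
        have "- (a * f y) \<le> \<bar>a * f y\<bar>" by simp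
        also have "\<dots> = \<bar>a\<bar> * \<bar>f y\<bar>" by (simp add: abs_mult)
        also have "\<dots> \<le> \<bar>a\<bar> * M0" using aby by (simp add: mult_left_mono)
        finally show ?thesis by simp
      qed
      have t3: "\<eta> * y * (f y - h/\<eta>) \<le> - (\<eta> * y * \<delta>)"
      proof -
        have "f y - h/\<eta> \<le> - \<delta>" using fy unfolding \<delta>_def by simp
        then have "\<eta> * y * (f y - h/\<eta>) \<le> \<eta> * y * (- \<delta>)" using ep y Y3 by (intro mult_left_mono) auto
        then show ?thesis by simp
      qed
      have t4: "\<eta> * y * \<delta> \<ge> \<bar>\<beta>\<bar> + \<alpha>/4 * M0^2 + \<bar>a\<bar> * M0 + kk"
      proof -
        have "\<eta> * y * \<delta> \<ge> \<eta> * Y3 * \<delta>" using y ep dp by (intro mult_right_mono mult_left_mono) (auto simp: \<delta>_def)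
        also have "\<eta> * Y3 * \<delta> = \<eta> * \<delta> + (\<bar>\<beta>\<bar> + \<alpha>/4 * M0^2 + \<bar>a\<bar> * M0 + kk)"
          unfolding Y3_def using ep dp by (simp add: field_simps \<delta>_def)
        finally show ?thesis using ep dp by (smt (verit) \<delta>_def mult_pos_pos)
      qed
      have "kk * f' y = \<beta> + \<alpha>/4 * (f y)^2 + \<eta> * y * (f y - h/\<eta>) - a * f y"
        using solf_kk[OF S, of y] y Y3 unfolding F_def by simp
      also have "\<dots> \<le> - kk" using t1 t2 t3 t4 abs_ge_self[of \<beta>] by linarith
      finally have "kk * f' y \<le> kk * (-1)" by simp
      then show ?thesis by (metis mult_le_cancel_left_pos kkp)
    qed
    have "f (Y3 + 1) \<le> f Y3 + (-1) * ((Y3 + 1) - Y3)"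
      by (rule lin_upper[where f' = f']) (use solf_at[OF S] f'n Y3 in auto)
    moreover have "f Y3 \<le> f (Y3 + 1)" using mono_onD[OF M, of Y3 "Y3 + 1"] Y3 by simp
    ultimately show False by simp
  qed
  then show ?thesis using lim by simp
qed

lemma sol_unique:
  assumes S1: "solf \<beta>1 f1 f1'" and S2: "solf \<beta>2 f2 f2'" and i1: "f1 0 = -r" and i2: "f2 0 = -r"
    and l1: "(f1 \<longlongrightarrow> h/\<eta>) at_top" and l2: "(f2 \<longlongrightarrow> h/\<eta>) at_top" and lt: "\<beta>1 < \<beta>2"
  shows False
proof -
  define d where "d t = f2 t - f1 t" for t
  define d' where "d' t = f2' t - f1' t" for t
  define \<Delta> where "\<Delta> = \<beta>2 - \<beta>1"
  have Dp: "\<Delta> > 0" using lt by (simp add: \<Delta>_def)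
  have deq: "kk * d' t = \<Delta> + (\<alpha>/4 * (f1 t + f2 t) + \<eta> * t - a) * d t" if "t \<ge> 0" for t
  proof -
    have "kk * d' t = F \<beta>2 t (f2 t) - F \<beta>1 t (f1 t)"
      using solf_kk[OF S1 that] solf_kk[OF S2 that] by (simp add: d'_def algebra_simps)
    also have "\<dots> = \<Delta> + (\<alpha>/4 * (f1 t + f2 t) + \<eta> * t - a) * d t"
      unfolding F_def d_def \<Delta>_def by (simp add: field_simps power2_eq_square)
    finally show ?thesis .
  qed
  have dw: "(d has_real_derivative d' t) (at t within {0..})" if "t \<ge> 0" for t
    unfolding d_def[abs_def] d'_def using S1 S2 that unfolding solf_def by (auto intro!: derivative_eq_intros)
  have da: "(d has_real_derivative d' t) (at t)" if "t > 0" for t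
    unfolding d_def[abs_def] d'_def using solf_at[OF S1 that] solf_at[OF S2 that] by (auto intro!: derivative_eq_intros)
  have d0: "d 0 = 0" by (simp add: d_def i1 i2)
  have d'z: "d' t = \<Delta> / kk" if "t \<ge> 0" "d t = 0" for t
    using deq[OF that(1)] that(2) kkp by (simp add: field_simps)
  obtain e0 where e0: "e0 > 0" "\<And>x. x > 0 \<Longrightarrow> x < e0 \<Longrightarrow> d x > 0"
  proof -
    from has_real_derivative_pos_inc_right[OF dw[of 0]] d'z[of 0] d0 Dp kkp
    obtain e where "e > 0" "\<forall>x>0. 0 + x \<in> {0..} \<longrightarrow> x < e \<longrightarrow> d 0 < d (0 + x)" by auto
    then show ?thesis using that d0 by auto
  qed
  have dpos: "d y > 0" if y: "y > 0" for y
  proof (rule ccontr)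
    assume "\<not> d y > 0"
    then have dy: "d y \<le> 0" by simp
    define e where "e = min (e0/2) (y/2)"
    have e: "e > 0" "e < e0" "e < y" using e0 y by (auto simp: e_def)
    have de: "d e > 0" using e0(2)[OF e(1,2)] .
    have cont: "continuous_on {e..y} d"
      by (intro continuous_at_imp_continuous_on ballI DERIV_isCont[OF da]) (use e in auto)
    from first_cross[OF _ cont de dy] e
    obtain z where z: "e < z" "z \<le> y" "d z = 0" "\<And>t. e \<le> t \<Longrightarrow> t < z \<Longrightarrow> d t > 0" by auto
    have "(d has_real_derivative \<Delta> / kk) (at z)" using da[of z] d'z[of z] z e by simp
    moreover have "\<Delta> / kk > 0" using Dp kkp by simp
    ultimately obtain dd where dd: "dd > 0" "\<And>x. x > 0 \<Longrightarrow> x < dd \<Longrightarrow> d (z - x) < d z"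
      using DERIV_pos_inc_left by blast
    define x where "x = min (dd/2) ((z - e)/2)"
    have x: "x > 0" "x < dd" using dd z by (auto simp: x_def)
    have "x \<le> (z - e)/2" unfolding x_def by (rule min.cobounded2)
    then have xz: "e \<le> z - x" "z - x < z" using x z(1) by auto
    have "d (z - x) < 0" using dd(2)[OF x] z(3) by simp
    moreover have "d (z - x) > 0" using z(4)[OF xz] .
    ultimately show False by simp
  qed
  have "eventually (\<lambda>t. f1 t + f2 t > 0) at_top"
    using order_tendstoD(1)[OF tendsto_add[OF l1 l2], of 0] hp_pos by simp
  then obtain N where N: "\<And>t. t \<ge> N \<Longrightarrow> f1 t + f2 t > 0" unfolding eventually_at_top_linorder by blast
  define Y where "Y = max N (\<bar>a\<bar>/\<eta>) + 1"
  have "\<bar>a\<bar>/\<eta> \<ge> 0" using ep by simp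
  have Ya: "Y \<ge> \<bar>a\<bar>/\<eta> + 1" unfolding Y_def by simp
  have YN: "Y \<ge> N" unfolding Y_def by simp
  have Y: "Y > 0" "Y \<ge> N" "Y \<ge> \<bar>a\<bar>/\<eta>" using Ya YN \<open>\<bar>a\<bar>/\<eta> \<ge> 0\<close> by linarith+
  have grow: "d t \<ge> d Y + \<Delta>/kk * (t - Y)" if t: "t \<ge> Y" for t
  proof (rule lin_lower[OF t])
    fix s assume s: "Y \<le> s" "s \<le> t"
    have sp: "s > 0" using s Y by simp
    have "\<eta> * Y \<le> \<eta> * s" using s ep by (simp add: mult_left_mono)
    moreover have "\<bar>a\<bar> \<le> \<eta> * Y" using Y(3) ep by (simp add: field_simps)
    ultimately have "\<eta> * s \<ge> \<bar>a\<bar>" by linarith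
    then have "\<alpha>/4 * (f1 s + f2 s) + \<eta> * s - a \<ge> 0" using N[of s] s Y ap by (smt (verit) abs_ge_self mult_pos_pos divide_pos_pos)
    then have "(\<alpha>/4 * (f1 s + f2 s) + \<eta> * s - a) * d s \<ge> 0" using dpos[OF sp] by simp
    then have "kk * d' s \<ge> \<Delta>" using deq[of s] sp by simp
    then have "d' s \<ge> \<Delta>/kk" using kkp by (simp add: field_simps)
    then show "(d has_real_derivative d' s) (at s) \<and> \<Delta>/kk \<le> d' s" using da[OF sp] by simp
  qed
  have "(d \<longlongrightarrow> h/\<eta> - h/\<eta>) at_top" unfolding d_def[abs_def] by (rule tendsto_diff[OF l2 l1])
  then have "eventually (\<lambda>t. d t < 1) at_top" using order_tendstoD(2)[of d 0 at_top 1] by simp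
  then obtain N2 where N2: "\<And>t. t \<ge> N2 \<Longrightarrow> d t < 1" unfolding eventually_at_top_linorder by blast
  define t where "t = max N2 (Y + kk/\<Delta>)"
  have t: "t \<ge> N2" "t \<ge> Y + kk/\<Delta>" by (auto simp: t_def)
  have "d t \<ge> d Y + \<Delta>/kk * (t - Y)" using grow t Dp kkp by (smt (verit) divide_pos_pos)
  moreover have "\<Delta>/kk * (t - Y) \<ge> \<Delta>/kk * (kk/\<Delta>)" using t Dp kkp by (intro mult_left_mono) auto
  moreover have "\<Delta>/kk * (kk/\<Delta>) = 1" using Dp kkp by simp
  moreover have "d Y > 0" using dpos Y by simp
  ultimately have "d t > 1" by linarith
  then show False using N2[OF t(1)] by simp
qed

end

context prob begin

lemma is_sol_solf:
  assumes "is_sol \<sigma> \<eta> \<alpha> h r a \<beta> f"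
  obtains f' where "solf \<beta> f f'" "f 0 = -r"
proof -
  from assms obtain f' where f': "\<forall>y\<ge>0. (f has_real_derivative f' y) (at y within {0..}) \<and>
           \<sigma>\<^sup>2 / 2 * f' y = \<beta> + \<alpha> / 4 * (f y)\<^sup>2 + \<eta> * y * (f y - h / \<eta>) - a * f y" "f 0 = -r"
    unfolding is_sol_def by blast
  have "solf \<beta> f f'" unfolding solf_def kk_def F_def using f'(1) by simp
  then show ?thesis using that f'(2) by blast
qed

lemma good_props:
  assumes nS: "\<beta> \<notin> Splus" and nM: "\<beta> \<notin> Sminus"
  shows "is_sol \<sigma> \<eta> \<alpha> h r a \<beta> (V \<beta>)" "mono_on {0..} (V \<beta>)" "(V \<beta> \<longlongrightarrow> h/\<eta>) at_top"
    "\<beta> \<ge> 0" "\<beta> > beta2_low \<alpha> r a"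
proof -
  have wp: "w \<beta> y \<noteq> 0" if "y \<ge> 0" for y using notSp_w[OF nS that] by simp
  have der: "(V \<beta> has_real_derivative G \<beta> y / kk) (at y within {0..})" if "y \<ge> 0" for y
    using V_deriv[OF wp[OF that]] by (rule has_field_derivative_at_within)
  have eqn: "kk * (G \<beta> y / kk) = F \<beta> y (V \<beta> y)" for y using kkp by (simp add: G_def)
  show sol: "is_sol \<sigma> \<eta> \<alpha> h r a \<beta> (V \<beta>)"
    unfolding is_sol_def
  proof (intro conjI exI[of _ "\<lambda>y. G \<beta> y / kk"] allI impI)
    show "continuous_on {0..} (\<lambda>y. G \<beta> y / kk)"
      by (intro continuous_at_imp_continuous_on ballI continuous_intros G_cont wp) (use kkp in auto)
    fix y :: real assume y: "y \<ge> 0"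
    show "(V \<beta> has_real_derivative G \<beta> y / kk) (at y within {0..})" by (rule der[OF y])
    show "\<sigma>\<^sup>2 / 2 * (G \<beta> y / kk) = \<beta> + \<alpha> / 4 * (V \<beta> y)\<^sup>2 + \<eta> * y * (V \<beta> y - h / \<eta>) - a * V \<beta> y"
      using eqn[of y] unfolding kk_def F_def by simp
  qed (rule V0)
  show mono: "mono_on {0..} (V \<beta>)" by (rule good_mono[OF nS nM])
  have S: "solf \<beta> (V \<beta>) (\<lambda>y. G \<beta> y / kk)" unfolding solf_def using der eqn by auto
  show lim: "(V \<beta> \<longlongrightarrow> h/\<eta>) at_top"
    by (rule sol_lim[OF S mono_on_subset[OF mono]]) auto
  have G0: "G \<beta> 0 > 0"
  proof (rule ccontr)
    assume "\<not> G \<beta> 0 > 0"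
    then have G00: "G \<beta> 0 = 0" using good_G[OF nS nM, of 0] by simp
    have "(G \<beta> has_real_derivative \<eta> * V \<beta> 0 - h) (at 0)"
      using G_deriv[OF wp[of 0]] G00 by simp
    moreover have "\<eta> * V \<beta> 0 - h < 0"
    proof -
      have en: "\<eta> * r \<ge> 0" using ep rp by simp
      then show ?thesis using hp by (simp add: V0)
    qed
    ultimately obtain d where d: "d > 0" "\<And>x. x > 0 \<Longrightarrow> x < d \<Longrightarrow> G \<beta> 0 > G \<beta> (0 + x)"
      using DERIV_neg_dec_right by blast
    have "G \<beta> (d/2) < 0" using d(2)[of "d/2"] d(1) G00 by simp
    moreover have "G \<beta> (d/2) \<ge> 0" using good_G[OF nS nM, of "d/2"] d(1) by simp
    ultimately show False by simp
  qed
  have G0e: "G \<beta> 0 = \<beta> - beta2_low \<alpha> r a"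
    unfolding G_def F_def V0 beta2_low_def by (simp add: power2_eq_square)
  show "\<beta> > beta2_low \<alpha> r a" using G0 G0e by simp
  show "\<beta> \<ge> 0"
  proof (cases "r = 0")
    case True
    then show ?thesis using G0 G0e by (simp add: beta2_low_def)
  next
    case False
    then have rpos: "r > 0" using rp by simp
    have "eventually (\<lambda>y. V \<beta> y > 0) at_top" using order_tendstoD(1)[OF lim hp_pos] .
    then obtain Y0 where Y0: "\<And>y. y \<ge> Y0 \<Longrightarrow> V \<beta> y > 0" unfolding eventually_at_top_linorder by blast
    define Y where "Y = max Y0 0"
    have Y: "Y \<ge> 0" "V \<beta> Y > 0" using Y0[of Y] by (auto simp: Y_def)
    have "\<exists>x. 0 \<le> x \<and> x \<le> Y \<and> V \<beta> x = 0"
      by (rule IVT') (use V0 rpos Y V_cont_on[OF notSp_D[OF nS, of Y]] in auto)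
    then obtain y0 where y0: "0 \<le> y0" "y0 \<le> Y" "V \<beta> y0 = 0" by blast
    have "y0 \<noteq> 0" using y0 V0 rpos by auto
    then have y0p: "y0 > 0" using y0 by simp
    have "G \<beta> y0 = \<beta> - h * y0" unfolding G_def F_def y0(3) using ep by (simp add: field_simps)
    then have "\<beta> \<ge> h * y0" using good_G[OF nS nM y0(1)] by simp
    moreover have "h * y0 > 0" using hp y0p by simp
    ultimately show ?thesis by simp
  qed
qed

end

theorem lemma24:
  fixes \<sigma> \<eta> \<alpha> h r a :: real
  assumes "\<sigma> > 0" "\<eta> > 0" "\<alpha> > 0" "h > 0" "r \<ge> 0"
  defines "I \<equiv> (if a > - \<alpha> / 4 * r then I1 \<sigma> \<eta> \<alpha> h r a else I2 \<sigma> \<eta> \<alpha> h r a)"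
  shows "\<exists>w. is_sol \<sigma> \<eta> \<alpha> h r a (Inf I) w \<and> mono_on {0..} w \<and>
             (w \<longlongrightarrow> h / \<eta>) at_top"
proof -
  interpret P: prob \<sigma> \<eta> \<alpha> h r a using assms(1-5) by unfold_locales
  obtain \<beta>g where ng: "\<beta>g \<notin> P.Splus" "\<beta>g \<notin> P.Sminus" using P.good_ex by blast
  note GP = P.good_props[OF ng]
  have uniq: "\<beta> = \<beta>g" if sol: "is_sol \<sigma> \<eta> \<alpha> h r a \<beta> f" and mon: "mono_on {0<..} f" for \<beta> f
  proof -
    obtain f' where S: "P.solf \<beta> f f'" "f 0 = -r" using P.is_sol_solf[OF sol] by blast
    have l: "(f \<longlongrightarrow> h/\<eta>) at_top" by (rule P.sol_lim[OF S(1) mon])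
    obtain g' where Sg: "P.solf \<beta>g (P.V \<beta>g) g'" "P.V \<beta>g 0 = -r" using P.is_sol_solf[OF GP(1)] by blast
    show ?thesis
    proof (rule ccontr)
      assume "\<beta> \<noteq> \<beta>g"
      then consider "\<beta> < \<beta>g" | "\<beta>g < \<beta>" by linarith
      then show False
      proof cases
        case 1
        then show False using P.sol_unique[OF S(1) Sg(1) S(2) Sg(2) l GP(3)] by simp
      next
        case 2
        then show False using P.sol_unique[OF Sg(1) S(1) Sg(2) S(2) GP(3) l] by simp
      qed
    qed
  qed
  have mem: "\<beta>g \<in> I"
  proof -
    have "\<exists>w. is_sol \<sigma> \<eta> \<alpha> h r a \<beta>g w \<and> mono_on {0<..} w"
    proof (intro exI[of _ "P.V \<beta>g"] conjI)
      show "mono_on {0<..} (P.V \<beta>g)" by (rule mono_on_subset[OF GP(2)]) auto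
    qed (rule GP(1))
    then show ?thesis unfolding I_def I1_def I2_def using GP(4,5) by auto
  qed
  have sub: "I \<subseteq> {\<beta>g}"
  proof
    fix \<beta> assume "\<beta> \<in> I"
    then have "\<exists>w. is_sol \<sigma> \<eta> \<alpha> h r a \<beta> w \<and> mono_on {0<..} w"
      unfolding I_def I1_def I2_def by (auto split: if_splits)
    then show "\<beta> \<in> {\<beta>g}" using uniq by blast
  qed
  have "I = {\<beta>g}" using mem sub by blast
  then have "Inf I = \<beta>g" by simp
  then show ?thesis using GP(1-3) by auto
qed

end
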